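(* Let $V$ be a real vector space, let $R:V\to\mathbb{R}\cup\{+\infty\}$ and $f:\mathbb{R}^m\to\mathbb{R}\cup\{+\infty\}$ be convex functions, and let $\Phi:V\to\mathbb{R}^m$ be linear and surjective. Let $S$ be the set of minimizers of $\min_{u\in V} R(u)+f(\Phi u)$. Assume that $p\in S$, that $R(p)+f(\Phi p)<+\infty$, and that the level set $\mathrm{lev}_R(p)=\{u\in V: R(u)\le R(p)\}$ is linearly closed and contains no line. Let $\ell$ be the dimension of the minimal face $F(\Phi p,\mathrm{lev}_f(\Phi p))$ of $\Phi p$ in $\mathrm{lev}_f(\Phi p)=\{w\in\mathbb{R}^m: f(w)\le f(\Phi p)\}$. If $p$ belongs to a face of $S$ with dimension $j<+\infty$, then $p$ belongs to a face of $\mathrm{lev}_R(p)$ with dimension at most $k$, where $$k=\begin{cases} m-\ell+j-1 & \text{if } R(p)>\inf_V R \text{ or } f(\Phi p)>\inf_{\mathbb{R}^m} f,\\ m-\ell+j & \text{otherwise.}\end{cases}$$ If, moreover, $p$ satisfies the double obliqueness condition, then $k$ can be replaced by $m-\ell+j-2$.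
   Context: Convex-geometric notions (for a convex set $C$ in a real vector space $X$): for $x\neq y$, the open segment is $]x,y[=\{tx+(1-t)y: 0<t<1\}$. A face of $C$ is a convex subset $F\subseteq C$ such that every open segment contained in $C$ which intersects $F$ is contained in $F$. The dimension of a face is the dimension of its affine hull. For $x\in C$, the minimal (elementary) face $F(x,C)$ is the intersection of all faces of $C$ containing $x$ (it is itself a face). $C$ is linearly closed if its intersection with every line is a closed subset of that line; $C$ contains no line if there are no $a\in X$, $v\neq0$ with $a+\mathbb{R}v\subseteq C$. Double obliqueness condition: let $M=R(p)+f(\Phi p)$ be the minimal value, $\mathrm{epi}(R)=\{(u,r)\in V\times\mathbb{R}: R(u)\le r\}$ and $\mathrm{hypo}(M-f)=\{(w,r)\in\mathbb{R}^m\times\mathbb{R}: M-f(w)\ge r\}$. For a convex set $C\subseteq X\times\mathbb{R}$ and $(x,r)\in C$, the face $F((x,r),C)$ is called horizontal if its affine hull is contained in $X\times\{r\}$ and oblique otherwise. The point $p$ satisfies the double obliqueness condition if both $F((p,R(p)),\mathrm{epi}(R))$ and $F((\Phi p, M-f(\Phi p)),\mathrm{hypo}(M-f))$ are oblique (note $M-f(\Phi p)=R(p)$). *)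

theory Defs
  imports "HOL-Analysis.Analysis"
begin

definition is_face :: "'a::real_vector set \<Rightarrow> 'a set \<Rightarrow> bool" where
  "is_face F C \<longleftrightarrow> F \<subseteq> C \<and> convex F \<and>
     (\<forall>x y. x \<noteq> y \<longrightarrow> open_segment x y \<subseteq> C \<longrightarrow> open_segment x y \<inter> F \<noteq> {}
        \<longrightarrow> open_segment x y \<subseteq> F)"

definition min_face :: "'a::real_vector \<Rightarrow> 'a set \<Rightarrow> 'a set" where
  "min_face x C = \<Inter>{F. is_face F C \<and> x \<in> F}"

text \<open>Dimension of the affine hull of a (nonempty) set S: the dimension of the linear
  subspace spanned by the differences x - y (x, y in S), i.e. the supremum of the
  cardinalities of finite linearly independent subsets of it (possibly infinite).\<close>
definition fdim :: "'a::real_vector set \<Rightarrow> enat" where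
  "fdim S = Sup {enat (card B) | B. finite B \<and> independent B \<and>
                   B \<subseteq> span {x - y | x y. x \<in> S \<and> y \<in> S}}"

definition epi :: "('a \<Rightarrow> ereal) \<Rightarrow> ('a \<times> real) set" where
  "epi R = {(u, r). R u \<le> ereal r}"

definition convex_ext :: "('a::real_vector \<Rightarrow> ereal) \<Rightarrow> bool" where
  "convex_ext R \<longleftrightarrow> convex (epi R)"

definition linearly_closed :: "'a::real_vector set \<Rightarrow> bool" where
  "linearly_closed C \<longleftrightarrow> (\<forall>a v. closed {t::real. a + t *\<^sub>R v \<in> C})"

definition contains_no_line :: "'a::real_vector set \<Rightarrow> bool" where
  "contains_no_line C \<longleftrightarrow> \<not> (\<exists>a v. v \<noteq> 0 \<and> (\<forall>t::real. a + t *\<^sub>R v \<in> C))"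

definition lev :: "('a \<Rightarrow> ereal) \<Rightarrow> 'a \<Rightarrow> 'a set" where
  "lev R p = {u. R u \<le> R p}"

definition oblique :: "('a::real_vector \<times> real) \<Rightarrow> ('a \<times> real) set \<Rightarrow> bool" where
  "oblique xr C \<longleftrightarrow> \<not> (affine hull (min_face xr C) \<subseteq> {(x, s). s = snd xr})"

definition hypo_diff :: "ereal \<Rightarrow> ('a \<Rightarrow> ereal) \<Rightarrow> ('a \<times> real) set" where
  "hypo_diff M f = {(w, r). M - f w \<ge> ereal r}"

end

theory Submission
  imports Defs
begin


lemma conv_ext_le:
  assumes "convex_ext g" "g x \<le> ereal a" "g y \<le> ereal b" "0 \<le> t" "t \<le> 1"
  shows "g ((1 - t) *\<^sub>R x + t *\<^sub>R y) \<le> ereal ((1 - t) * a + t * b)"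
proof -
  have "(x, a) \<in> epi g" "(y, b) \<in> epi g" using assms by (auto simp: epi_def)
  then have "(1 - t) *\<^sub>R (x, a) + t *\<^sub>R (y, b) \<in> epi g"
    using convexD[OF assms(1)[unfolded convex_ext_def], of "(x,a)" "(y,b)" "1-t" t] assms(4,5) by simp
  then show ?thesis by (simp add: epi_def)
qed

definition nb :: "'a::real_vector \<Rightarrow> 'a set \<Rightarrow> 'a set" where
  "nb p C = {x \<in> C. \<exists>e>0. p + e *\<^sub>R (p - x) \<in> C}"

lemma seg_extend:
  assumes "c \<in> open_segment x y" "y' \<in> open_segment x y"
  shows "\<exists>k>0. c + k *\<^sub>R (c - y') \<in> open_segment x y"
proof -
  obtain a where a: "0 < a" "a < 1" "c = (1 - a) *\<^sub>R x + a *\<^sub>R y" and xy: "x \<noteq> y"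
    using assms(1) by (auto simp: in_segment)
  obtain b where b: "0 < b" "b < 1" "y' = (1 - b) *\<^sub>R x + b *\<^sub>R y"
    using assms(2) by (auto simp: in_segment)
  define k where "k = min a (1 - a) / 2"
  have k: "k > 0" "k \<le> a/2" "k \<le> (1-a)/2" using a by (auto simp: k_def)
  define g where "g = a + k * (a - b)"
  have "\<bar>k * (a - b)\<bar> < a" "\<bar>k * (a - b)\<bar> < 1 - a"
  proof -
    have "\<bar>a - b\<bar> < 1" using a b by auto
    then have "\<bar>k * (a - b)\<bar> \<le> k" using k by (simp add: abs_mult mult_left_le)
    then show "\<bar>k * (a - b)\<bar> < a" "\<bar>k * (a - b)\<bar> < 1 - a" using k a by auto
  qed
  then have g: "0 < g" "g < 1" unfolding g_def by auto
  have "c + k *\<^sub>R (c - y') = (1 - g) *\<^sub>R x + g *\<^sub>R y"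
    by (simp add: a(3) b(3) g_def algebra_simps)
  then show ?thesis using g k xy by (auto simp: in_segment)
qed

lemma nb_face:
  assumes C: "convex C" and pC: "p \<in> C"
  shows "is_face (nb p C) C"
  unfolding is_face_def
proof (intro conjI allI impI)
  show "nb p C \<subseteq> C" by (auto simp: nb_def)
  have seg: "p + e' *\<^sub>R (p - x) \<in> C" if "p \<in> C" "p + e *\<^sub>R (p - x) \<in> C" "0 \<le> e'" "e' \<le> e" "e > 0" for x e e'
  proof -
    have "p + e' *\<^sub>R (p - x) = (1 - e'/e) *\<^sub>R p + (e'/e) *\<^sub>R (p + e *\<^sub>R (p - x))"
      using that by (simp add: algebra_simps)
    moreover have "(1 - e'/e) *\<^sub>R p + (e'/e) *\<^sub>R (p + e *\<^sub>R (p - x)) \<in> C"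
      using that C by (intro convexD) auto
    ultimately show ?thesis by simp
  qed
  show "convex (nb p C)"
    unfolding convex_def
  proof (intro ballI allI impI)
    fix x1 x2 :: 'a and u v :: real
    assume x1: "x1 \<in> nb p C" and x2: "x2 \<in> nb p C" and uv: "0 \<le> u" "0 \<le> v" "u + v = 1"
    obtain e1 where e1: "e1 > 0" "p + e1 *\<^sub>R (p - x1) \<in> C" "x1 \<in> C" using x1 by (auto simp: nb_def)
    obtain e2 where e2: "e2 > 0" "p + e2 *\<^sub>R (p - x2) \<in> C" "x2 \<in> C" using x2 by (auto simp: nb_def)
    define e where "e = min e1 e2"
    have "p + e *\<^sub>R (p - x1) \<in> C" "p + e *\<^sub>R (p - x2) \<in> C"
      using seg[OF pC e1(2)] seg[OF pC e2(2)] e1 e2 by (auto simp: e_def)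
    then have "u *\<^sub>R (p + e *\<^sub>R (p - x1)) + v *\<^sub>R (p + e *\<^sub>R (p - x2)) \<in> C"
      using C uv by (intro convexD) auto
    moreover have "u *\<^sub>R (p + e *\<^sub>R (p - x1)) + v *\<^sub>R (p + e *\<^sub>R (p - x2))
        = p + e *\<^sub>R (p - (u *\<^sub>R x1 + v *\<^sub>R x2))"
    proof -
      have "u *\<^sub>R (p + e *\<^sub>R (p - x1)) + v *\<^sub>R (p + e *\<^sub>R (p - x2))
         = (u + v) *\<^sub>R p + e *\<^sub>R ((u + v) *\<^sub>R p - (u *\<^sub>R x1 + v *\<^sub>R x2))"
        by (simp add: algebra_simps)
      then show ?thesis using uv by simp
    qed
    moreover have "u *\<^sub>R x1 + v *\<^sub>R x2 \<in> C" using C uv e1 e2 by (intro convexD) auto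
    ultimately show "u *\<^sub>R x1 + v *\<^sub>R x2 \<in> nb p C"
      using e1 e2 unfolding nb_def e_def by (auto intro!: exI[of _ "min e1 e2"])
  qed
next
  fix x y
  assume xy: "x \<noteq> y" and sub: "open_segment x y \<subseteq> C" and ne: "open_segment x y \<inter> nb p C \<noteq> {}"
  then obtain c where c: "c \<in> open_segment x y" "c \<in> nb p C" by auto
  then obtain e0 where e0: "e0 > 0" "p + e0 *\<^sub>R (p - c) \<in> C" by (auto simp: nb_def)
  show "open_segment x y \<subseteq> nb p C"
  proof
    fix y' assume y': "y' \<in> open_segment x y"
    obtain k where k: "k > 0" "c + k *\<^sub>R (c - y') \<in> open_segment x y"
      using seg_extend[OF c(1) y'] by auto
    define q where "q = c + k *\<^sub>R (c - y')"
    define u0 where "u0 = p + e0 *\<^sub>R (p - c)"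
    define d where "d = k * e0 / (1 + e0 + k)"
    define al where "al = (1 + k) / (1 + e0 + k)"
    have d: "d > 0" "d < e0"
      using k(1) e0(1) by (auto simp: d_def field_simps intro: add_pos_pos mult_pos_pos)
    have al: "0 \<le> al" "al \<le> 1" using k(1) e0(1) by (auto simp: al_def field_simps)
    have qC: "q \<in> C" "u0 \<in> C" using k sub e0 by (auto simp: q_def u0_def)
    have "(1 - al) *\<^sub>R q + al *\<^sub>R u0 \<in> C" using qC al C by (intro convexD) auto
    moreover have "(1 - al) *\<^sub>R q + al *\<^sub>R u0 = p + d *\<^sub>R (p - y')"
    proof -
      have 1: "(1 - al) *\<^sub>R q + al *\<^sub>R u0 = (al * (1 + e0)) *\<^sub>R p
          + ((1 - al) * (1 + k) - al * e0) *\<^sub>R c - ((1 - al) * k) *\<^sub>R y'"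
        by (simp add: q_def u0_def algebra_simps)
      have D: "1 + e0 + k > 0" using e0(1) k(1) by simp
      have 0: "1 - al = e0 / (1 + e0 + k)" using D by (simp add: al_def field_simps)
      have 2: "al * (1 + e0) = 1 + d" using D by (simp add: al_def d_def field_simps)
      have 3: "(1 - al) * (1 + k) - al * e0 = 0" unfolding 0 using D
        by (simp add: al_def field_simps)
      have 4: "(1 - al) * k = d" unfolding 0 using D
        by (simp add: d_def field_simps)
      show ?thesis unfolding 1 2 3 4 by (simp add: algebra_simps)
    qed
    ultimately show "y' \<in> nb p C" using d y' sub by (auto simp: nb_def)
  qed
qed


lemma seg_in:
  assumes C: "convex C" and pC: "p \<in> C" and "p + e *\<^sub>R (p - x) \<in> C" "0 \<le> e'" "e' \<le> e" "e > 0"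
  shows "p + e' *\<^sub>R (p - x) \<in> C"
proof -
  have "p + e' *\<^sub>R (p - x) = (1 - e'/e) *\<^sub>R p + (e'/e) *\<^sub>R (p + e *\<^sub>R (p - x))"
    using assms by (simp add: algebra_simps)
  moreover have "(1 - e'/e) *\<^sub>R p + (e'/e) *\<^sub>R (p + e *\<^sub>R (p - x)) \<in> C"
    using assms by (intro convexD) auto
  ultimately show ?thesis by simp
qed

lemma mf_face:
  assumes C: "convex C" and pC: "p \<in> C"
  shows "is_face (min_face p C) C" "p \<in> min_face p C"
proof -
  have CC: "is_face C C" using C by (auto simp: is_face_def)
  show "p \<in> min_face p C" by (auto simp: min_face_def)
  show "is_face (min_face p C) C"
    unfolding is_face_def
  proof (intro conjI allI impI)
    show "min_face p C \<subseteq> C" using CC pC by (auto simp: min_face_def)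
    show "convex (min_face p C)" unfolding min_face_def
      by (rule convex_Inter) (auto simp: is_face_def)
    fix x y assume xy: "x \<noteq> y" "open_segment x y \<subseteq> C" "open_segment x y \<inter> min_face p C \<noteq> {}"
    show "open_segment x y \<subseteq> min_face p C"
      unfolding min_face_def
    proof (rule Inter_greatest)
      fix F assume F: "F \<in> {F. is_face F C \<and> p \<in> F}"
      have "open_segment x y \<inter> F \<noteq> {}" using xy(3) F by (auto simp: min_face_def)
      then show "open_segment x y \<subseteq> F" using F xy(1,2) unfolding is_face_def by blast
    qed
  qed
qed

lemma mf_nb:
  assumes C: "convex C" and pC: "p \<in> C"
  shows "min_face p C \<subseteq> nb p C"
proof -
  have "p \<in> nb p C" using pC by (auto simp: nb_def intro: exI[of _ 1])
  then show ?thesis using nb_face[OF C pC] by (auto simp: min_face_def)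
qed

definition small_dir :: "'a::real_vector \<Rightarrow> 'a set \<Rightarrow> 'a \<Rightarrow> bool" where
  "small_dir p C w \<longleftrightarrow> (\<exists>e>0. \<forall>t. \<bar>t\<bar> \<le> e \<longrightarrow> p + t *\<^sub>R w \<in> C)"

lemma small_dir_add:
  assumes C: "convex C" and "small_dir p C w1" "small_dir p C w2"
  shows "small_dir p C (w1 + w2)"
proof -
  obtain e1 where e1: "e1 > 0" "\<forall>t. \<bar>t\<bar> \<le> e1 \<longrightarrow> p + t *\<^sub>R w1 \<in> C" using assms(2) by (auto simp: small_dir_def)
  obtain e2 where e2: "e2 > 0" "\<forall>t. \<bar>t\<bar> \<le> e2 \<longrightarrow> p + t *\<^sub>R w2 \<in> C" using assms(3) by (auto simp: small_dir_def)
  have "\<forall>t. \<bar>t\<bar> \<le> min e1 e2 / 2 \<longrightarrow> p + t *\<^sub>R (w1 + w2) \<in> C"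
  proof (intro allI impI)
    fix t :: real assume t: "\<bar>t\<bar> \<le> min e1 e2 / 2"
    have "p + (2*t) *\<^sub>R w1 \<in> C" "p + (2*t) *\<^sub>R w2 \<in> C" using e1 e2 t by auto
    then have "(1 - 1/2) *\<^sub>R (p + (2*t) *\<^sub>R w1) + (1/2) *\<^sub>R (p + (2*t) *\<^sub>R w2) \<in> C"
      using C by (intro convexD) auto
    moreover have "(1 - 1/2) *\<^sub>R (p + (2*t) *\<^sub>R w1) + (1/2) *\<^sub>R (p + (2*t) *\<^sub>R w2) = p + t *\<^sub>R (w1 + w2)"
      by (simp add: algebra_simps) (metis scaleR_add_left field_sum_of_halves scaleR_one)
    ultimately show "p + t *\<^sub>R (w1 + w2) \<in> C" by simp
  qed
  then show ?thesis using e1 e2 unfolding small_dir_def by (auto intro!: exI[of _ "min e1 e2 / 2"])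
qed

lemma small_dir_scale:
  assumes "small_dir p C w"
  shows "small_dir p C (c *\<^sub>R w)"
proof -
  obtain e where e: "e > 0" "\<forall>t. \<bar>t\<bar> \<le> e \<longrightarrow> p + t *\<^sub>R w \<in> C" using assms by (auto simp: small_dir_def)
  have "\<forall>t. \<bar>t\<bar> \<le> e / (\<bar>c\<bar> + 1) \<longrightarrow> p + t *\<^sub>R (c *\<^sub>R w) \<in> C"
  proof (intro allI impI)
    fix t :: real assume t: "\<bar>t\<bar> \<le> e / (\<bar>c\<bar> + 1)"
    have "\<bar>t * c\<bar> \<le> e"
    proof -
      have "\<bar>t * c\<bar> = \<bar>t\<bar> * \<bar>c\<bar>" by (simp add: abs_mult)
      also have "\<dots> \<le> (e / (\<bar>c\<bar> + 1)) * (\<bar>c\<bar> + 1)" using t by (intro mult_mono) auto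
      also have "\<dots> = e" by simp
      finally show ?thesis .
    qed
    then show "p + t *\<^sub>R (c *\<^sub>R w) \<in> C" using e by simp
  qed
  then show ?thesis using e unfolding small_dir_def by (auto intro!: exI[of _ "e / (\<bar>c\<bar> + 1)"])
qed

lemma small_dir_nb:
  assumes C: "convex C" and pC: "p \<in> C" and x: "x \<in> nb p C"
  shows "small_dir p C (x - p)"
proof -
  obtain e where e: "e > 0" "p + e *\<^sub>R (p - x) \<in> C" "x \<in> C" using x by (auto simp: nb_def)
  have "\<forall>t. \<bar>t\<bar> \<le> min e 1 \<longrightarrow> p + t *\<^sub>R (x - p) \<in> C"
  proof (intro allI impI)
    fix t :: real assume t: "\<bar>t\<bar> \<le> min e 1"
    show "p + t *\<^sub>R (x - p) \<in> C"
    proof (cases "t \<ge> 0")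
      case True
      have "(1 - t) *\<^sub>R p + t *\<^sub>R x \<in> C" using C pC e(3) True t by (intro convexD) auto
      moreover have "(1 - t) *\<^sub>R p + t *\<^sub>R x = p + t *\<^sub>R (x - p)" by (simp add: algebra_simps)
      ultimately show ?thesis by simp
    next
      case False
      have "p + (-t) *\<^sub>R (p - x) \<in> C" using seg_in[OF C pC e(2), of "-t"] False t e(1) by auto
      moreover have "p + (-t) *\<^sub>R (p - x) = p + t *\<^sub>R (x - p)" by (simp add: algebra_simps)
      ultimately show ?thesis by metis
    qed
  qed
  then show ?thesis using e unfolding small_dir_def by (auto intro!: exI[of _ "min e 1"])
qed

lemma span_small:
  assumes C: "convex C" and pC: "p \<in> C"
    and w: "w \<in> span {x - y | x y. x \<in> min_face p C \<and> y \<in> min_face p C}"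
  shows "small_dir p C w"
  using w
proof (induct rule: span_induct)
  case (base)
  show "subspace (Collect (small_dir p C))"
    unfolding subspace_def
  proof (intro conjI ballI allI)
    show "0 \<in> Collect (small_dir p C)" using pC by (auto simp: small_dir_def intro: exI[of _ 1])
    show "x + y \<in> Collect (small_dir p C)" if "x \<in> Collect (small_dir p C)" "y \<in> Collect (small_dir p C)" for x y
      using small_dir_add[OF C] that by auto
    show "c *\<^sub>R x \<in> Collect (small_dir p C)" if "x \<in> Collect (small_dir p C)" for c x
      using small_dir_scale that by auto
  qed
next
  case (step v)
  then obtain x y where xy: "v = x - y" "x \<in> min_face p C" "y \<in> min_face p C" by auto
  have "x \<in> nb p C" "y \<in> nb p C" using xy mf_nb[OF C pC] by auto
  then have "small_dir p C (x - p)" "small_dir p C ((-1) *\<^sub>R (y - p))"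
    using small_dir_nb[OF C pC] small_dir_scale by blast+
  then have "small_dir p C ((x - p) + (-1) *\<^sub>R (y - p))" by (rule small_dir_add[OF C])
  moreover have "(x - p) + (-1) *\<^sub>R (y - p) = v" using xy by simp
  ultimately show ?case by metis
qed




lemma count:
  fixes Phi :: "'v::real_vector \<Rightarrow> real^'m"
  assumes lin: "linear Phi" and U: "subspace U" and Vf: "subspace Vf"
    and L0: "L0 \<subseteq> Vf" "independent L0" "finite L0" "card L0 = l"
    and H: "Phi ` U \<subseteq> H" "Vf \<subseteq> H"
    and J: "\<And>I. finite I \<Longrightarrow> independent I \<Longrightarrow> I \<subseteq> {w\<in>U. Phi w \<in> Vf} \<Longrightarrow> card I \<le> jj"
    and B: "finite B" "independent B" "B \<subseteq> U"
  shows "card B + l \<le> jj + dim H"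
proof -
  define X where "X = Phi ` B \<union> L0"
  obtain K where K: "L0 \<subseteq> K" "K \<subseteq> X" "independent K" "X \<subseteq> span K"
    using maximal_independent_subset_extend[of L0 X] L0 by (auto simp: X_def)
  have finX: "finite X" using B L0 by (auto simp: X_def)
  then have finK: "finite K" using K finite_subset by blast
  have "X \<subseteq> H" using H B L0 by (auto simp: X_def)
  then have "K \<subseteq> H" using K by blast
  then have cK: "card K \<le> dim H" using independent_card_le_dim K(3) by blast
  have cK2: "card K = l + card (K - L0)"
    using card_Diff_subset[OF L0(3) K(1)] card_mono[OF finK K(1)] L0(4) by simp
  have "K - L0 \<subseteq> Phi ` B" using K by (auto simp: X_def)
  then obtain C where C: "C \<subseteq> B" "inj_on Phi C" "K - L0 = Phi ` C"
    using subset_image_inj by metis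
  have cC: "card C = card (K - L0)" using C card_image by metis
  have dec: "\<exists>c. c \<in> span C \<and> Phi (b - c) \<in> Vf" if b: "b \<in> B" for b
  proof -
    have "Phi b \<in> span K" using K b by (auto simp: X_def)
    also have "span K \<subseteq> span (L0 \<union> Phi ` C)" using C by (intro span_mono) auto
    finally obtain y z where yz: "Phi b = y + z" "y \<in> span L0" "z \<in> span (Phi ` C)"
      unfolding span_Un by auto
    obtain c where c: "c \<in> span C" "z = Phi c"
      using yz(3) unfolding span_linear_image[OF lin] by auto
    have "span L0 \<subseteq> Vf" using L0 Vf by (intro span_minimal) auto
    then have "Phi (b - c) \<in> Vf" using yz c linear_diff[OF lin] by auto
    then show ?thesis using c by auto
  qed
  define cf where "cf b = (SOME c. c \<in> span C \<and> Phi (b - c) \<in> Vf)" for b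
  have cf: "cf b \<in> span C" "Phi (b - cf b) \<in> Vf" if "b \<in> B" for b
    using someI_ex[OF dec[OF that]] by (auto simp: cf_def)
  have spC: "span C \<subseteq> U" using C B U by (intro span_minimal) auto
  define W where "W = (\<lambda>b. b - cf b) ` B"
  have W: "W \<subseteq> {w\<in>U. Phi w \<in> Vf}"
    using cf spC B subspace_diff[OF U] by (auto simp: W_def) (meson in_mono)
  obtain I where I: "I \<subseteq> W" "independent I" "W \<subseteq> span I"
    using maximal_independent_subset[of W] by metis
  have finI: "finite I" using I(1) B(1) unfolding W_def by (meson finite_imageI finite_subset)
  have cI: "card I \<le> jj" using J[OF finI I(2)] I W by auto
  have "B \<subseteq> span (C \<union> I)"
  proof
    fix b assume b: "b \<in> B"
    have "b - cf b \<in> span (C \<union> I)" using I b span_mono[of I "C \<union> I"] by (auto simp: W_def)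
    moreover have "cf b \<in> span (C \<union> I)" using cf b span_mono[of C "C \<union> I"] by auto
    ultimately have "(b - cf b) + cf b \<in> span (C \<union> I)" by (rule span_add)
    then show "b \<in> span (C \<union> I)" by simp
  qed
  then have "card B \<le> card (C \<union> I)"
    using independent_span_bound[of "C \<union> I" B] B C finI finite_subset by blast
  also have "\<dots> \<le> card C + card I" by (rule card_Un_le)
  finally show ?thesis using cK cK2 cC cI by linarith
qed




lemma conv_lev:
  assumes "convex_ext g" shows "convex {x. g x \<le> ereal a}"
  unfolding convex_def
proof (intro ballI allI impI)
  fix x y and u v :: real
  assume "x \<in> {x. g x \<le> ereal a}" "y \<in> {x. g x \<le> ereal a}" "0 \<le> u" "0 \<le> v" "u + v = 1"
  then have "g ((1-v) *\<^sub>R x + v *\<^sub>R y) \<le> ereal ((1 - v) * a + v * a)"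
    using conv_ext_le[OF assms, of x a y a v] by auto
  moreover have "(1 - v) * a + v * a = a" "u = 1 - v" using \<open>u + v = 1\<close> by (auto simp: algebra_simps)
  ultimately show "u *\<^sub>R x + v *\<^sub>R y \<in> {x. g x \<le> ereal a}" by simp
qed

lemma slope:
  assumes g: "convex_ext g" and gp: "g p \<le> ereal gp" and gx: "g x \<le> ereal a" and e: "e > 0"
    and ge: "g (p + e *\<^sub>R (p - x)) \<le> ereal (gp + e * (gp - a))"
  shows "\<forall>t. \<bar>t\<bar> \<le> min e 1 \<longrightarrow> g (p + t *\<^sub>R (x - p)) \<le> ereal (gp + t * (a - gp))"
proof (intro allI impI)
  fix t :: real assume t: "\<bar>t\<bar> \<le> min e 1"
  show "g (p + t *\<^sub>R (x - p)) \<le> ereal (gp + t * (a - gp))"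
  proof (cases "t \<ge> 0")
    case True
    have "g ((1 - t) *\<^sub>R p + t *\<^sub>R x) \<le> ereal ((1 - t) * gp + t * a)"
      using conv_ext_le[OF g gp gx, of t] True t by auto
    moreover have "(1 - t) *\<^sub>R p + t *\<^sub>R x = p + t *\<^sub>R (x - p)" by (simp add: algebra_simps)
    moreover have "(1 - t) * gp + t * a = gp + t * (a - gp)" by (simp add: algebra_simps)
    ultimately show ?thesis by simp
  next
    case False
    define mu where "mu = - t / e"
    have mu: "0 \<le> mu" "mu \<le> 1" using False t e by (auto simp: mu_def field_simps)
    have "g ((1 - mu) *\<^sub>R p + mu *\<^sub>R (p + e *\<^sub>R (p - x))) \<le> ereal ((1 - mu) * gp + mu * (gp + e * (gp - a)))"
      using conv_ext_le[OF g gp ge, of mu] mu by auto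
    moreover have "(1 - mu) *\<^sub>R p + mu *\<^sub>R (p + e *\<^sub>R (p - x)) = p + t *\<^sub>R (x - p)"
      using e by (simp add: mu_def algebra_simps)
    moreover have "(1 - mu) * gp + mu * (gp + e * (gp - a)) = gp + t * (a - gp)"
      using e by (simp add: mu_def algebra_simps)
    ultimately show ?thesis by simp
  qed
qed

lemma affine_level: "affine {(x, s). s = (c::real)}"
  unfolding affine_def by (auto simp: algebra_simps)
    (metis distrib_right mult_1 )

lemma oblique_point:
  assumes "oblique (p, c) C"
  shows "\<exists>x r. (x, r) \<in> min_face (p, c) C \<and> r \<noteq> c"
proof (rule ccontr)
  assume "\<not> ?thesis"
  then have "min_face (p, c) C \<subseteq> {(x, s). s = c}" by auto
  then have "affine hull (min_face (p, c) C) \<subseteq> {(x, s). s = c}"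
    by (intro hull_minimal affine_level)
  then show False using assms by (simp add: oblique_def)
qed

lemma oblique_epi:
  assumes conv: "convex_ext R" and Rp: "R p = ereal rp" and ob: "oblique (p, rp) (epi R)"
  shows "\<exists>v s e. s \<noteq> 0 \<and> e > 0 \<and> (\<forall>t. \<bar>t\<bar> \<le> e \<longrightarrow> R (p + t *\<^sub>R v) \<le> ereal (rp + t * s))"
proof -
  have cE: "convex (epi R)" using conv by (simp add: convex_ext_def)
  have pE: "(p, rp) \<in> epi R" using Rp by (simp add: epi_def)
  obtain x r where xr: "(x, r) \<in> min_face (p, rp) (epi R)" "r \<noteq> rp"
    using oblique_point[OF ob] by auto
  then have "(x, r) \<in> nb (p, rp) (epi R)" using mf_nb[OF cE pE] by auto
  then obtain e where e: "e > 0" "R x \<le> ereal r" "(p, rp) + e *\<^sub>R ((p, rp) - (x, r)) \<in> epi R"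
    by (auto simp: nb_def epi_def)
  then have "R (p + e *\<^sub>R (p - x)) \<le> ereal (rp + e * (rp - r))" by (simp add: epi_def)
  from slope[OF conv _ e(2) e(1) this] Rp
  have "\<forall>t. \<bar>t\<bar> \<le> min e 1 \<longrightarrow> R (p + t *\<^sub>R (x - p)) \<le> ereal (rp + t * (r - rp))" by simp
  then show ?thesis using xr(2) e(1) by (intro exI[of _ "x - p"] exI[of _ "r - rp"] exI[of _ "min e 1"]) auto
qed

lemma hypo_mem:
  assumes "\<forall>w. f w \<noteq> -\<infinity>"
  shows "(w, r) \<in> hypo_diff (ereal c) f \<longleftrightarrow> f w \<le> ereal (c - r)"
  using assms[rule_format, of w] unfolding hypo_diff_def
  by (cases "f w") (auto simp: algebra_simps)

lemma oblique_hypo: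
  assumes conv: "convex_ext f" and ninf: "\<forall>w. f w \<noteq> -\<infinity>" and fp: "f w0 = ereal fp"
    and ob: "oblique (w0, rp) (hypo_diff (ereal (rp + fp)) f)"
  shows "\<exists>z s e. s \<noteq> 0 \<and> e > 0 \<and> (\<forall>t. \<bar>t\<bar> \<le> e \<longrightarrow> f (w0 + t *\<^sub>R z) \<le> ereal (fp + t * s))"
proof -
  let ?H = "hypo_diff (ereal (rp + fp)) f"
  have mem: "\<And>w r. (w, r) \<in> ?H \<longleftrightarrow> f w \<le> ereal (rp + fp - r)" using hypo_mem[OF ninf] by blast
  have cE: "convex ?H"
    unfolding convex_def
  proof (intro ballI allI impI)
    fix x y :: "'a \<times> real" and u v :: real
    assume xy: "x \<in> ?H" "y \<in> ?H" and uv: "0 \<le> u" "0 \<le> v" "u + v = 1"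
    obtain x1 x2 y1 y2 where xx: "x = (x1, x2)" "y = (y1, y2)" by fastforce
    have "f ((1 - v) *\<^sub>R x1 + v *\<^sub>R y1) \<le> ereal ((1 - v) * (rp + fp - x2) + v * (rp + fp - y2))"
      using conv_ext_le[OF conv, of x1 _ y1 _ v] xy uv xx mem by auto
    moreover have "(1 - v) * (rp + fp - x2) + v * (rp + fp - y2) = rp + fp - (u * x2 + v * y2)"
      using uv by (simp add: algebra_simps) (metis add.commute distrib_right mult_1)
    ultimately show "u *\<^sub>R x + v *\<^sub>R y \<in> ?H" using uv xx mem
      by (simp add: eq_diff_eq[of u 1 v, symmetric])
  qed
  have pE: "(w0, rp) \<in> ?H" using mem fp by simp
  obtain x r where xr: "(x, r) \<in> min_face (w0, rp) ?H" "r \<noteq> rp"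
    using oblique_point[OF ob] by auto
  then have "(x, r) \<in> nb (w0, rp) ?H" using mf_nb[OF cE pE] by auto
  then obtain e where e: "e > 0" "(x, r) \<in> ?H" "(w0, rp) + e *\<^sub>R ((w0, rp) - (x, r)) \<in> ?H"
    by (auto simp: nb_def)
  have ex: "f x \<le> ereal (rp + fp - r)" using e(2) mem by blast
  have "f (w0 + e *\<^sub>R (w0 - x)) \<le> ereal (rp + fp - (rp + e * (rp - r)))" using e(3) mem by simp
  then have "f (w0 + e *\<^sub>R (w0 - x)) \<le> ereal (fp + e * (fp - (rp + fp - r)))" by (simp add: algebra_simps)
  from slope[OF conv _ ex e(1) this] fp
  have "\<forall>t. \<bar>t\<bar> \<le> min e 1 \<longrightarrow> f (w0 + t *\<^sub>R (x - w0)) \<le> ereal (fp + t * (rp + fp - r - fp))" by simp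
  then show ?thesis using xr(2) e(1)
    by (intro exI[of _ "x - w0"] exI[of _ "rp - r"] exI[of _ "min e 1"]) (auto simp: algebra_simps)
qed

lemma fdim_upper:
  assumes "fdim F = enat j" "finite I" "independent I" "I \<subseteq> span {x - y | x y. x \<in> F \<and> y \<in> F}"
  shows "card I \<le> j"
proof -
  have "enat (card I) \<le> fdim F" unfolding fdim_def using assms(2-4) by (intro Sup_upper) auto
  then show ?thesis using assms(1) by simp
qed

lemma fdim_attained:
  assumes "fdim F = enat l"
  shows "\<exists>L. finite L \<and> independent L \<and> L \<subseteq> span {x - y | x y. x \<in> F \<and> y \<in> F} \<and> card L = l"
proof -
  let ?A = "{enat (card B) | B. finite B \<and> independent B \<and> B \<subseteq> span {x - y | x y. x \<in> F \<and> y \<in> F}}"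
  have ne: "?A \<noteq> {}" by (auto intro!: exI[of _ "{}"] simp: independent_empty)
  have "Sup ?A = enat l" using assms by (simp add: fdim_def)
  then have fin: "finite ?A" and eq: "Max ?A = enat l" using ne by (auto simp: Sup_enat_def split: if_splits)
  have "Max ?A \<in> ?A" using Max_in[OF fin ne] .
  then show ?thesis using eq by auto
qed

lemma fdim_le:
  assumes "\<forall>B. finite B \<and> independent B \<and> B \<subseteq> span {x - y | x y. x \<in> G \<and> y \<in> G} \<longrightarrow> int (card B) \<le> K"
  shows "\<exists>d. fdim G = enat d \<and> int d \<le> K"
proof -
  have K0: "K \<ge> 0" using assms[rule_format, of "{}"] by (simp add: independent_empty)
  have "fdim G \<le> enat (nat K)" unfolding fdim_def
  proof (rule Sup_least)
    fix y assume "y \<in> {enat (card B) | B. finite B \<and> independent B \<and> B \<subseteq> span {x - y | x y. x \<in> G \<and> y \<in> G}}"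
    then obtain B where "y = enat (card B)" "finite B" "independent B" "B \<subseteq> span {x - y | x y. x \<in> G \<and> y \<in> G}" by auto
    then show "y \<le> enat (nat K)" using assms K0 by auto
  qed
  then obtain d where "fdim G = enat d" "d \<le> nat K" by (cases "fdim G") auto
  then show ?thesis using K0 by (intro exI[of _ d]) auto
qed

lemma sign_choice:
  assumes "e > 0" "s \<noteq> (0::real)"
  shows "\<exists>t. \<bar>t\<bar> \<le> e \<and> t * s < 0"
proof (cases "s > 0")
  case True then show ?thesis using assms by (intro exI[of _ "-e"]) auto
next
  case False then show ?thesis using assms by (intro exI[of _ "e"]) (auto simp: mult_pos_neg)
qed




theorem theorem1:
  fixes R :: "'v::real_vector \<Rightarrow> ereal"
    and f :: "real^'m \<Rightarrow> ereal"
    and \<Phi> :: "'v \<Rightarrow> real^'m"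
    and p :: 'v and l j :: nat
  assumes R_conv: "convex_ext R" and R_ninf: "\<forall>u. R u \<noteq> -\<infinity>"
    and f_conv: "convex_ext f" and f_ninf: "\<forall>w. f w \<noteq> -\<infinity>"
    and lin: "linear \<Phi>" and sur: "surj \<Phi>"
    and S_def: "S = {u. \<forall>v. R u + f (\<Phi> u) \<le> R v + f (\<Phi> v)}"
    and pS: "p \<in> S"
    and fin: "R p + f (\<Phi> p) < \<infinity>"
    and lc: "linearly_closed (lev R p)"
    and nl: "contains_no_line (lev R p)"
    and l_def: "fdim (min_face (\<Phi> p) (lev f (\<Phi> p))) = enat l"
    and k_def: "k = (if R p > (INF u. R u) \<or> f (\<Phi> p) > (INF w. f w)
                     then int CARD('m) - int l + int j - 1
                     else int CARD('m) - int l + int j)"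
    and faceS: "\<exists>F. is_face F S \<and> p \<in> F \<and> fdim F = enat j"
  shows "(\<exists>G d. is_face G (lev R p) \<and> p \<in> G \<and> fdim G = enat d \<and> int d \<le> k)
       \<and> ((oblique (p, real_of_ereal (R p)) (epi R)
           \<and> oblique (\<Phi> p, real_of_ereal ((R p + f (\<Phi> p)) - f (\<Phi> p)))
                     (hypo_diff (R p + f (\<Phi> p)) f))
          \<longrightarrow> (\<exists>G d. is_face G (lev R p) \<and> p \<in> G \<and> fdim G = enat d
                     \<and> int d \<le> int CARD('m) - int l + int j - 2))"
proof -
  obtain F where F: "is_face F S" "p \<in> F" "fdim F = enat j" using faceS by blast
  have "R p \<noteq> \<infinity>" "f (\<Phi> p) \<noteq> \<infinity>" using fin R_ninf f_ninf by auto
  then obtain rp fp where rp: "R p = ereal rp" and fp: "f (\<Phi> p) = ereal fp"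
    using R_ninf f_ninf by (metis ereal_cases)
  have low: "\<And>u. ereal (rp + fp) \<le> R u + f (\<Phi> u)" using pS rp fp by (auto simp: S_def)
  have inS: "\<And>u. R u + f (\<Phi> u) \<le> ereal (rp + fp) \<Longrightarrow> u \<in> S"
    using low by (auto simp: S_def intro: order_trans)
  have Plin: "\<And>a b (t::real). \<Phi> (a + t *\<^sub>R b) = \<Phi> a + t *\<^sub>R \<Phi> b"
    using lin by (simp add: linear_add linear_scale)
  have Pdiff: "\<And>a b. \<Phi> (a - b) = \<Phi> a - \<Phi> b" using lin by (simp add: linear_diff)
  define CR where "CR = lev R p"
  have CR_eq: "CR = {u. R u \<le> ereal rp}" by (simp add: CR_def lev_def rp)
  have cCR: "convex CR" unfolding CR_eq by (rule conv_lev[OF R_conv])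
  have pCR: "p \<in> CR" by (simp add: CR_eq rp)
  define Cf where "Cf = lev f (\<Phi> p)"
  have Cf_eq: "Cf = {w. f w \<le> ereal fp}" by (simp add: Cf_def lev_def fp)
  have cCf: "convex Cf" unfolding Cf_eq by (rule conv_lev[OF f_conv])
  have pCf: "\<Phi> p \<in> Cf" by (simp add: Cf_eq fp)
  define G where "G = min_face p CR"
  define U where "U = span {x - y | x y. x \<in> G \<and> y \<in> G}"
  define N where "N = min_face (\<Phi> p) Cf"
  define Vf where "Vf = span {x - y | x y. x \<in> N \<and> y \<in> N}"
  define D where "D = span {x - y | x y. x \<in> F \<and> y \<in> F}"
  have RU: "\<exists>e>0. \<forall>t. \<bar>t\<bar> \<le> e \<longrightarrow> R (p + t *\<^sub>R w) \<le> ereal rp" if "w \<in> U" for w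
    using span_small[OF cCR pCR, of w] that unfolding U_def G_def small_dir_def CR_eq by auto
  have fV: "\<exists>e>0. \<forall>t. \<bar>t\<bar> \<le> e \<longrightarrow> f (\<Phi> p + t *\<^sub>R z) \<le> ereal fp" if "z \<in> Vf" for z
    using span_small[OF cCf pCf, of z] that unfolding Vf_def N_def small_dir_def Cf_eq by auto
  have dirS: "w \<in> D" if e: "e > 0" and h: "\<forall>t. \<bar>t\<bar> \<le> e \<longrightarrow> p + t *\<^sub>R w \<in> S" for w e
  proof (cases "w = 0")
    case True then show ?thesis by (simp add: D_def span_zero)
  next
    case False
    have d2: "(p + e *\<^sub>R w) - (p - e *\<^sub>R w) = (2*e) *\<^sub>R w"
      by (simp add: algebra_simps scaleR_add_left[symmetric])
    have "(2*e) *\<^sub>R w \<noteq> 0" using False e by simp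
    then have ne: "p - e *\<^sub>R w \<noteq> p + e *\<^sub>R w" using d2 by force
    have seg: "open_segment (p - e *\<^sub>R w) (p + e *\<^sub>R w) \<subseteq> S"
    proof
      fix x assume "x \<in> open_segment (p - e *\<^sub>R w) (p + e *\<^sub>R w)"
      then obtain u where u: "0 < u" "u < 1" "x = (1 - u) *\<^sub>R (p - e *\<^sub>R w) + u *\<^sub>R (p + e *\<^sub>R w)"
        by (auto simp: in_segment)
      have "x = p + ((2 * u - 1) * e) *\<^sub>R w" using u(3) by (simp add: algebra_simps scaleR_add_left[symmetric])
      moreover have "\<bar>(2 * u - 1) * e\<bar> \<le> e" using u e by (auto simp: abs_mult abs_le_iff)
      ultimately show "x \<in> S" using h by auto
    qed
    have pin: "p \<in> open_segment (p - e *\<^sub>R w) (p + e *\<^sub>R w)"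
      using ne unfolding in_segment by (intro conjI exI[of _ "1/2"]) (auto simp: algebra_simps scaleR_add_left[symmetric])
    have qin: "p + (e/2) *\<^sub>R w \<in> open_segment (p - e *\<^sub>R w) (p + e *\<^sub>R w)"
      using ne unfolding in_segment by (intro conjI exI[of _ "3/4"]) (auto simp: algebra_simps scaleR_add_left[symmetric])
    have "open_segment (p - e *\<^sub>R w) (p + e *\<^sub>R w) \<subseteq> F"
      using F(1) ne seg pin F(2) unfolding is_face_def by blast
    then have "p + (e/2) *\<^sub>R w \<in> F" using qin by auto
    then have "(p + (e/2) *\<^sub>R w) - p \<in> {x - y | x y. x \<in> F \<and> y \<in> F}" using F(2) by blast
    then have "(2/e) *\<^sub>R ((p + (e/2) *\<^sub>R w) - p) \<in> D" unfolding D_def by (intro span_scale span_base)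
    then show ?thesis using e by simp
  qed
  have WD: "w \<in> D" if w: "w \<in> U" "\<Phi> w \<in> Vf" for w
  proof -
    obtain e1 where e1: "e1 > 0" "\<forall>t. \<bar>t\<bar> \<le> e1 \<longrightarrow> R (p + t *\<^sub>R w) \<le> ereal rp" using RU w by blast
    obtain e2 where e2: "e2 > 0" "\<forall>t. \<bar>t\<bar> \<le> e2 \<longrightarrow> f (\<Phi> p + t *\<^sub>R \<Phi> w) \<le> ereal fp" using fV w by blast
    have "\<forall>t. \<bar>t\<bar> \<le> min e1 e2 \<longrightarrow> p + t *\<^sub>R w \<in> S"
    proof (intro allI impI)
      fix t :: real assume t: "\<bar>t\<bar> \<le> min e1 e2"
      have "R (p + t *\<^sub>R w) + f (\<Phi> (p + t *\<^sub>R w)) \<le> ereal rp + ereal fp"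
        using e1 e2 t Plin by (intro add_mono) auto
      then show "p + t *\<^sub>R w \<in> S" by (intro inS) simp
    qed
    then show ?thesis using e1 e2 by (intro dirS[of "min e1 e2"]) auto
  qed
  have J: "card I \<le> j" if "finite I" "independent I" "I \<subseteq> D" for I
    using fdim_upper[OF F(3) that[unfolded D_def]] .
  obtain L0 where L0: "finite L0" "independent L0" "L0 \<subseteq> Vf" "card L0 = l"
    using fdim_attained[OF l_def[folded Cf_def, folded N_def]] unfolding Vf_def by blast
  have sU: "subspace U" "subspace Vf" by (simp_all add: U_def Vf_def subspace_span)
  define H where "H = span (\<Phi> ` U \<union> Vf)"
  have H: "\<Phi> ` U \<subseteq> H" "Vf \<subseteq> H" unfolding H_def using span_superset[of "\<Phi> ` U \<union> Vf"] by auto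
  have sH: "subspace H" by (simp add: H_def subspace_span)
  have Hdec: "\<exists>a b. a \<in> U \<and> b \<in> Vf \<and> h = \<Phi> a + b" if hH: "h \<in> H" for h
  proof -
    have sUU: "span U = U" using sU(1) by (simp add: span_eq_iff)
    have "span (\<Phi> ` U) = \<Phi> ` U" using span_linear_image[OF lin, of U] sUU by simp
    moreover have "span Vf = Vf" using sU by (simp add: span_eq_iff)
    moreover obtain x y where "h = x + y" "x \<in> span (\<Phi> ` U)" "y \<in> span Vf"
      using hH unfolding H_def span_Un by blast
    ultimately show ?thesis by (metis imageE)
  qed
  have cnt: "card B + l \<le> jj + dim H"
    if "\<And>I. finite I \<Longrightarrow> independent I \<Longrightarrow> I \<subseteq> {w\<in>U. \<Phi> w \<in> Vf} \<Longrightarrow> card I \<le> jj"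
      "finite B" "independent B" "B \<subseteq> U" for B jj
    using count[OF lin sU(1) sU(2) L0(3) L0(2) L0(1) L0(4) H(1) H(2) that(1) that(2-4)] .
  have J0: "card I \<le> j" if "finite I" "independent I" "I \<subseteq> {w\<in>U. \<Phi> w \<in> Vf}" for I
    using J[OF that(1,2)] that(3) WD by auto
  have dimH: "dim H \<le> CARD('m)" using dim_subset_UNIV[of H] by simp
  have dimH1: "dim H + 1 \<le> CARD('m)" if "H \<noteq> UNIV"
  proof -
    have sHH: "span H = H" using sH by (metis span_eq_iff)
    have "dim H = CARD('m) \<longleftrightarrow> span H = UNIV" using dim_eq_full[of H] by simp
    then have "dim H \<noteq> CARD('m)" using sHH that by metis
    then show ?thesis using dimH by simp
  qed
  have Gface: "is_face G (lev R p)" "p \<in> G" using mf_face[OF cCR pCR] by (simp_all add: G_def CR_def)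
  have Plin2: "\<And>a b x y. \<Phi> (a *\<^sub>R x + b *\<^sub>R y) = a *\<^sub>R \<Phi> x + b *\<^sub>R \<Phi> y"
    using lin by (simp add: linear_add linear_scale)
  have Pscale: "\<And>c x. \<Phi> (c *\<^sub>R x) = c *\<^sub>R \<Phi> x" using lin by (simp add: linear_scale)
  have Padd: "\<And>x y. \<Phi> (x + y) = \<Phi> x + \<Phi> y" using lin by (simp add: linear_add)
  have Rp': "R p \<le> ereal rp" "f (\<Phi> p) \<le> ereal fp" using rp fp by simp_all
  have half: "\<And>a b::real. (1 - 1/2) * a + (1/2) * b = (a + b) / 2" by (simp add: field_simps)
  have Hne: "H \<noteq> UNIV" if cond: "R p > (INF u. R u) \<or> f (\<Phi> p) > (INF w. f w)"
  proof
    assume HU: "H = UNIV"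
    from cond show False
    proof
      assume "R p > (INF u. R u)"
      then obtain u0 where "R u0 < R p" by (auto simp: INF_less_iff)
      then obtain r0 where r0: "R u0 = ereal r0" "r0 < rp" using R_ninf rp by (cases "R u0") auto
      obtain a b where ab: "a \<in> U" "b \<in> Vf" "\<Phi> (u0 - p) = \<Phi> a + b" using Hdec HU by blast
      obtain ea where ea: "ea > 0" "\<forall>t. \<bar>t\<bar> \<le> ea \<longrightarrow> R (p + t *\<^sub>R a) \<le> ereal rp" using RU ab by blast
      obtain eb where eb: "eb > 0" "\<forall>t. \<bar>t\<bar> \<le> eb \<longrightarrow> f (\<Phi> p + t *\<^sub>R b) \<le> ereal fp" using fV ab by blast
      define t where "t = min (ea/2) (min eb (1/2))"
      have t: "t > 0" "2*t \<le> 1" "\<bar>-2*t\<bar> \<le> ea" "\<bar>t\<bar> \<le> eb" using ea eb by (auto simp: t_def)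
      define x1 where "x1 = (1 - 2*t) *\<^sub>R p + (2*t) *\<^sub>R u0"
      define x2 where "x2 = p + (-2*t) *\<^sub>R a"
      define u where "u = (1 - 1/2) *\<^sub>R x1 + (1/2) *\<^sub>R x2"
      have R1: "R x1 \<le> ereal ((1 - 2*t) * rp + (2*t) * r0)"
        unfolding x1_def using conv_ext_le[OF R_conv Rp'(1), of u0 r0 "2*t"] r0 t by auto
      have R2: "R x2 \<le> ereal rp" unfolding x2_def using ea t by blast
      have Ru: "R u \<le> ereal ((1 - 1/2) * ((1 - 2*t) * rp + (2*t) * r0) + (1/2) * rp)"
        unfolding u_def using conv_ext_le[OF R_conv R1 R2, of "1/2"] by simp
      have "\<Phi> u0 = \<Phi> p + \<Phi> a + b" using ab(3) Pdiff by (simp add: algebra_simps)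
      then have "\<Phi> u = \<Phi> p + t *\<^sub>R b"
        unfolding u_def x1_def x2_def Plin2 by (simp add: Padd Pdiff Pscale algebra_simps scaleR_add_left[symmetric])
      then have fu: "f (\<Phi> u) \<le> ereal fp" using eb t by simp
      have "R u + f (\<Phi> u) \<le> ereal ((1 - 1/2) * ((1 - 2*t) * rp + (2*t) * r0) + (1/2) * rp) + ereal fp"
        using Ru fu by (rule add_mono)
      also have "\<dots> < ereal (rp + fp)" using t r0 by (simp add: algebra_simps)
      finally show False using low[of u] by simp
    next
      assume "f (\<Phi> p) > (INF w. f w)"
      then obtain w0 where "f w0 < f (\<Phi> p)" by (auto simp: INF_less_iff)
      then obtain r0 where r0: "f w0 = ereal r0" "r0 < fp" using f_ninf fp by (cases "f w0") auto
      obtain a b where ab: "a \<in> U" "b \<in> Vf" "w0 - \<Phi> p = \<Phi> a + b" using Hdec HU by blast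
      obtain ea where ea: "ea > 0" "\<forall>t. \<bar>t\<bar> \<le> ea \<longrightarrow> R (p + t *\<^sub>R a) \<le> ereal rp" using RU ab by blast
      obtain eb where eb: "eb > 0" "\<forall>t. \<bar>t\<bar> \<le> eb \<longrightarrow> f (\<Phi> p + t *\<^sub>R b) \<le> ereal fp" using fV ab by blast
      define t where "t = min ea (min (eb/2) (1/2))"
      have t: "t > 0" "2*t \<le> 1" "\<bar>t\<bar> \<le> ea" "\<bar>-2*t\<bar> \<le> eb" using ea eb by (auto simp: t_def)
      define u where "u = p + t *\<^sub>R a"
      define y1 where "y1 = (1 - 2*t) *\<^sub>R \<Phi> p + (2*t) *\<^sub>R w0"
      define y2 where "y2 = \<Phi> p + (-2*t) *\<^sub>R b"
      have Ru: "R u \<le> ereal rp" unfolding u_def using ea t by blast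
      have f1: "f y1 \<le> ereal ((1 - 2*t) * fp + (2*t) * r0)"
        unfolding y1_def using conv_ext_le[OF f_conv Rp'(2), of w0 r0 "2*t"] r0 t by auto
      have f2: "f y2 \<le> ereal fp" unfolding y2_def using eb t by blast
      have "w0 = \<Phi> p + \<Phi> a + b" using ab(3) by (simp add: algebra_simps)
      then have "\<Phi> u = (1 - 1/2) *\<^sub>R y1 + (1/2) *\<^sub>R y2"
        unfolding u_def y1_def y2_def by (simp add: Padd Pdiff Pscale algebra_simps scaleR_add_left[symmetric])
      then have fu: "f (\<Phi> u) \<le> ereal ((1 - 1/2) * ((1 - 2*t) * fp + (2*t) * r0) + (1/2) * fp)"
        using conv_ext_le[OF f_conv f1 f2, of "1/2"] by simp
      have "R u + f (\<Phi> u) \<le> ereal rp + ereal ((1 - 1/2) * ((1 - 2*t) * fp + (2*t) * r0) + (1/2) * fp)"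
        using Ru fu by (rule add_mono)
      also have "\<dots> < ereal (rp + fp)" using t r0 by (simp add: algebra_simps)
      finally show False using low[of u] by simp
    qed
  qed
  have part1: "\<exists>G d. is_face G (lev R p) \<and> p \<in> G \<and> fdim G = enat d \<and> int d \<le> k"
  proof -
    have "\<forall>B. finite B \<and> independent B \<and> B \<subseteq> span {x - y | x y. x \<in> G \<and> y \<in> G} \<longrightarrow> int (card B) \<le> k"
    proof (intro allI impI)
      fix B assume B: "finite B \<and> independent B \<and> B \<subseteq> span {x - y | x y. x \<in> G \<and> y \<in> G}"
      then have c: "card B + l \<le> j + dim H" using cnt[OF J0] by (auto simp: U_def)
      show "int (card B) \<le> k"
      proof (cases "R p > (INF u. R u) \<or> f (\<Phi> p) > (INF w. f w)")
        case True
        then have "dim H + 1 \<le> CARD('m)" using Hne dimH1 by blast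
        then show ?thesis using c True by (simp add: k_def)
      next
        case False
        then show ?thesis using c dimH by (simp add: k_def)
      qed
    qed
    from fdim_le[OF this] Gface show ?thesis by blast
  qed
  have part2: "\<exists>G d. is_face G (lev R p) \<and> p \<in> G \<and> fdim G = enat d
                     \<and> int d \<le> int CARD('m) - int l + int j - 2"
    if obl: "oblique (p, real_of_ereal (R p)) (epi R)"
      "oblique (\<Phi> p, real_of_ereal ((R p + f (\<Phi> p)) - f (\<Phi> p))) (hypo_diff (R p + f (\<Phi> p)) f)"
  proof -
    have o1: "oblique (p, rp) (epi R)" using obl(1) rp by simp
    have o2: "oblique (\<Phi> p, rp) (hypo_diff (ereal (rp + fp)) f)" using obl(2) rp fp by simp
    obtain v s ev where vs: "s \<noteq> 0" "ev > 0" "\<forall>t. \<bar>t\<bar> \<le> ev \<longrightarrow> R (p + t *\<^sub>R v) \<le> ereal (rp + t * s)"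
      using oblique_epi[OF R_conv rp o1] by blast
    obtain z sg ez where zs: "sg \<noteq> 0" "ez > 0" "\<forall>t. \<bar>t\<bar> \<le> ez \<longrightarrow> f (\<Phi> p + t *\<^sub>R z) \<le> ereal (fp + t * sg)"
      using oblique_hypo[OF f_conv f_ninf fp o2] by blast
    have vH: "\<Phi> v \<notin> H"
    proof
      assume "\<Phi> v \<in> H"
      then obtain a b where ab: "a \<in> U" "b \<in> Vf" "\<Phi> v = \<Phi> a + b" using Hdec by blast
      obtain ea where ea: "ea > 0" "\<forall>t. \<bar>t\<bar> \<le> ea \<longrightarrow> R (p + t *\<^sub>R a) \<le> ereal rp" using RU ab by blast
      obtain eb where eb: "eb > 0" "\<forall>t. \<bar>t\<bar> \<le> eb \<longrightarrow> f (\<Phi> p + t *\<^sub>R b) \<le> ereal fp" using fV ab by blast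
      obtain t where t: "\<bar>t\<bar> \<le> min (ev/2) (min (ea/2) eb)" "t * s < 0"
        using sign_choice[of "min (ev/2) (min (ea/2) eb)" s] vs ea eb by auto
      define x1 where "x1 = p + (2*t) *\<^sub>R v"
      define x2 where "x2 = p + (-2*t) *\<^sub>R a"
      define u where "u = (1 - 1/2) *\<^sub>R x1 + (1/2) *\<^sub>R x2"
      have R1: "R x1 \<le> ereal (rp + (2*t) * s)" unfolding x1_def using vs(3)[rule_format, of "2*t"] t by auto
      have R2: "R x2 \<le> ereal rp" unfolding x2_def using ea(2)[rule_format, of "-2*t"] t by auto
      have Ru: "R u \<le> ereal ((1 - 1/2) * (rp + (2*t) * s) + (1/2) * rp)"
        unfolding u_def using conv_ext_le[OF R_conv R1 R2, of "1/2"] by simp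
      have "\<Phi> u = \<Phi> p + t *\<^sub>R b"
        using ab(3) unfolding u_def x1_def x2_def
        by (simp add: Padd Pdiff Pscale algebra_simps scaleR_add_left[symmetric])
      then have fu: "f (\<Phi> u) \<le> ereal fp" using eb t by simp
      have "R u + f (\<Phi> u) \<le> ereal ((1 - 1/2) * (rp + (2*t) * s) + (1/2) * rp) + ereal fp"
        using Ru fu by (rule add_mono)
      also have "\<dots> < ereal (rp + fp)" using t by (simp add: algebra_simps)
      finally show False using low[of u] by simp
    qed
    have zH: "z \<notin> H"
    proof
      assume "z \<in> H"
      then obtain a b where ab: "a \<in> U" "b \<in> Vf" "z = \<Phi> a + b" using Hdec by blast
      obtain ea where ea: "ea > 0" "\<forall>t. \<bar>t\<bar> \<le> ea \<longrightarrow> R (p + t *\<^sub>R a) \<le> ereal rp" using RU ab by blast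
      obtain eb where eb: "eb > 0" "\<forall>t. \<bar>t\<bar> \<le> eb \<longrightarrow> f (\<Phi> p + t *\<^sub>R b) \<le> ereal fp" using fV ab by blast
      obtain t where t: "\<bar>t\<bar> \<le> min ea (min (ez/2) (eb/2))" "t * sg < 0"
        using sign_choice[of "min ea (min (ez/2) (eb/2))" sg] zs ea eb by auto
      define u where "u = p + t *\<^sub>R a"
      define y1 where "y1 = \<Phi> p + (2*t) *\<^sub>R z"
      define y2 where "y2 = \<Phi> p + (-2*t) *\<^sub>R b"
      have Ru: "R u \<le> ereal rp" unfolding u_def using ea(2)[rule_format, of t] t by auto
      have f1: "f y1 \<le> ereal (fp + (2*t) * sg)" unfolding y1_def using zs(3)[rule_format, of "2*t"] t by auto
      have f2: "f y2 \<le> ereal fp" unfolding y2_def using eb(2)[rule_format, of "-2*t"] t by auto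
      have "\<Phi> u = (1 - 1/2) *\<^sub>R y1 + (1/2) *\<^sub>R y2"
        using ab(3) unfolding u_def y1_def y2_def
        by (simp add: Padd Pdiff Pscale algebra_simps scaleR_add_left[symmetric])
      then have fu: "f (\<Phi> u) \<le> ereal ((1 - 1/2) * (fp + (2*t) * sg) + (1/2) * fp)"
        using conv_ext_le[OF f_conv f1 f2, of "1/2"] by simp
      have "R u + f (\<Phi> u) \<le> ereal rp + ereal ((1 - 1/2) * (fp + (2*t) * sg) + (1/2) * fp)"
        using Ru fu by (rule add_mono)
      also have "\<dots> < ereal (rp + fp)" using t by (simp add: algebra_simps)
      finally show False using low[of u] by simp
    qed
    have HnU: "H \<noteq> UNIV" using vH by auto
    have bound: "\<forall>B. finite B \<and> independent B \<and> B \<subseteq> span {x - y | x y. x \<in> G \<and> y \<in> G}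
        \<longrightarrow> int (card B) \<le> int CARD('m) - int l + int j - 2"
    proof (cases "dim H + 2 \<le> CARD('m)")
      case True
      show ?thesis
      proof (intro allI impI)
        fix B assume B: "finite B \<and> independent B \<and> B \<subseteq> span {x - y | x y. x \<in> G \<and> y \<in> G}"
        then have c: "card B + l \<le> j + dim H" using cnt[OF J0] by (auto simp: U_def)
        then show "int (card B) \<le> int CARD('m) - int l + int j - 2" using True by simp
      qed
    next
      case False
      then have dH: "dim H + 1 = CARD('m)" using dimH1[OF HnU] by simp
      have sHH: "span H = H" using sH by (metis span_eq_iff)
      have "dim (insert (\<Phi> v) H) = CARD('m)" using dim_insert[of "\<Phi> v" H] vH sHH dH by simp
      then have "span (insert (\<Phi> v) H) = UNIV" using dim_eq_full[of "insert (\<Phi> v) H"] by simp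
      then obtain c where "z - c *\<^sub>R \<Phi> v \<in> span H" using span_breakdown_eq[of z "\<Phi> v" H] by auto
      then have "z - c *\<^sub>R \<Phi> v \<in> H" using sHH by simp
      then obtain a b where ab: "a \<in> U" "b \<in> Vf" "z - c *\<^sub>R \<Phi> v = \<Phi> a + b" using Hdec by blast
      have c0: "c \<noteq> 0"
      proof
        assume "c = 0"
        then have "z = \<Phi> a + b" using ab by simp
        moreover have "\<Phi> a \<in> H" "b \<in> H" using ab H by auto
        ultimately have "z \<in> H" using subspace_add[OF sH] by simp
        then show False using zH by simp
      qed
      obtain ea where ea: "ea > 0" "\<forall>t. \<bar>t\<bar> \<le> ea \<longrightarrow> R (p + t *\<^sub>R a) \<le> ereal rp" using RU ab by blast
      obtain eb where eb: "eb > 0" "\<forall>t. \<bar>t\<bar> \<le> eb \<longrightarrow> f (\<Phi> p + t *\<^sub>R b) \<le> ereal fp" using fV ab by blast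
      define E where "E = min (ev / (2 * (\<bar>c\<bar> + 1))) (min (ea/2) (min (ez/2) (eb/2)))"
      have E: "E > 0" using vs zs ea eb by (auto simp: E_def)
      define dd where "dd = c *\<^sub>R v + a"
      have key: "R (p + t *\<^sub>R dd) + f (\<Phi> (p + t *\<^sub>R dd)) \<le> ereal (rp + fp + t * (c * s + sg))"
        if t: "\<bar>t\<bar> \<le> E" for t
      proof -
        have tc: "\<bar>2 * t * c\<bar> \<le> ev"
        proof -
          have "\<bar>2 * t * c\<bar> = 2 * \<bar>t\<bar> * \<bar>c\<bar>" by (simp add: abs_mult)
          also have "\<dots> \<le> 2 * (ev / (2 * (\<bar>c\<bar> + 1))) * (\<bar>c\<bar> + 1)"
            using t by (intro mult_mono) (auto simp: E_def)
          also have "\<dots> = ev" proof - have "\<bar>c\<bar> + 1 > 0" by simp then show ?thesis by (simp add: field_simps) qed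
          finally show ?thesis .
        qed
        have tt: "\<bar>2 * t\<bar> \<le> ea" "\<bar>2 * t\<bar> \<le> ez" "\<bar>-2 * t\<bar> \<le> eb" using t by (auto simp: E_def)
        define x1 where "x1 = p + (2*t*c) *\<^sub>R v"
        define x2 where "x2 = p + (2*t) *\<^sub>R a"
        have R1: "R x1 \<le> ereal (rp + (2*t*c) * s)" unfolding x1_def using vs(3)[rule_format, of "2*t*c"] tc by auto
        have R2: "R x2 \<le> ereal rp" unfolding x2_def using ea(2)[rule_format, of "2*t"] tt by auto
        have "p + t *\<^sub>R dd = (1 - 1/2) *\<^sub>R x1 + (1/2) *\<^sub>R x2"
          unfolding dd_def x1_def x2_def by (simp add: algebra_simps scaleR_add_left[symmetric])
        then have Ru: "R (p + t *\<^sub>R dd) \<le> ereal ((1 - 1/2) * (rp + (2*t*c) * s) + (1/2) * rp)"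
          using conv_ext_le[OF R_conv R1 R2, of "1/2"] by simp
        define y1 where "y1 = \<Phi> p + (2*t) *\<^sub>R z"
        define y2 where "y2 = \<Phi> p + (-2*t) *\<^sub>R b"
        have f1: "f y1 \<le> ereal (fp + (2*t) * sg)" unfolding y1_def using zs(3)[rule_format, of "2*t"] tt by auto
        have f2: "f y2 \<le> ereal fp" unfolding y2_def using eb(2)[rule_format, of "-2*t"] tt by auto
        have zz: "z = c *\<^sub>R \<Phi> v + \<Phi> a + b" using ab(3) by (simp add: algebra_simps)
        have "\<Phi> (p + t *\<^sub>R dd) = (1 - 1/2) *\<^sub>R y1 + (1/2) *\<^sub>R y2"
          unfolding dd_def y1_def y2_def zz
          by (simp add: Padd Pdiff Pscale algebra_simps scaleR_add_left[symmetric])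
        then have fu: "f (\<Phi> (p + t *\<^sub>R dd)) \<le> ereal ((1 - 1/2) * (fp + (2*t) * sg) + (1/2) * fp)"
          using conv_ext_le[OF f_conv f1 f2, of "1/2"] by simp
        have "R (p + t *\<^sub>R dd) + f (\<Phi> (p + t *\<^sub>R dd))
            \<le> ereal ((1 - 1/2) * (rp + (2*t*c) * s) + (1/2) * rp) + ereal ((1 - 1/2) * (fp + (2*t) * sg) + (1/2) * fp)"
          using Ru fu by (rule add_mono)
        also have "\<dots> = ereal (rp + fp + t * (c * s + sg))" by (simp add: algebra_simps)
        finally show ?thesis .
      qed
      have cs: "c * s + sg = 0"
      proof (rule ccontr)
        assume "c * s + sg \<noteq> 0"
        then obtain t where t: "\<bar>t\<bar> \<le> E" "t * (c * s + sg) < 0" using sign_choice[OF E] by blast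
        have "R (p + t *\<^sub>R dd) + f (\<Phi> (p + t *\<^sub>R dd)) < ereal (rp + fp)"
          using key[OF t(1)] t(2) by (simp add: order_le_less_trans)
        then show False using low[of "p + t *\<^sub>R dd"] by simp
      qed
      have "\<forall>t. \<bar>t\<bar> \<le> E \<longrightarrow> p + t *\<^sub>R dd \<in> S"
        using key cs inS by simp
      then have ddD: "dd \<in> D" using dirS[OF E] by blast
      have ddU: "dd \<notin> U"
      proof
        assume "dd \<in> U"
        then have "dd - a \<in> U" using ab(1) sU(1) by (simp add: subspace_diff)
        then have "(1/c) *\<^sub>R (dd - a) \<in> U" using sU(1) by (simp add: subspace_scale)
        then have "v \<in> U" using c0 by (simp add: dd_def)
        then show False using vH H by auto
      qed
      have dd0: "dd \<noteq> 0" using ddU sU(1) by (auto simp: subspace_0)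
      have j1: "1 \<le> j" using J[of "{dd}"] ddD dd0 by (simp add: independent_insert independent_empty)
      have J1: "card I \<le> j - 1" if I: "finite I" "independent I" "I \<subseteq> {w\<in>U. \<Phi> w \<in> Vf}" for I
      proof -
        have "span I \<subseteq> U" using I sU(1) by (intro span_minimal) auto
        then have ns: "dd \<notin> span I" using ddU by auto
        have ni: "dd \<notin> I" using ddU I by auto
        have "independent (insert dd I)" using I(2) ns ni by (simp add: independent_insert)
        moreover have "insert dd I \<subseteq> D" using ddD I WD by auto
        ultimately have "card (insert dd I) \<le> j" using J I(1) by blast
        then show ?thesis using ni I(1) by simp
      qed
      show ?thesis
      proof (intro allI impI)
        fix B assume B: "finite B \<and> independent B \<and> B \<subseteq> span {x - y | x y. x \<in> G \<and> y \<in> G}"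
        then have c: "card B + l \<le> (j - 1) + dim H" using cnt[OF J1] by (auto simp: U_def)
        then show "int (card B) \<le> int CARD('m) - int l + int j - 2" using dH j1 by simp
      qed
    qed
    from fdim_le[OF bound] Gface show ?thesis by blast
  qed
  show ?thesis using part1 part2 by blast
qed


end
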